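(* Let $n\le m$ and let $W\in\mathbb{R}^{n\times m}$ have full row rank $n$. Let $r\ge 1$ be an integer with $2r\le n$. Define the rank capacity of a parameterized adapter $f_\theta(W)$ by $$\mathcal{R}(f_\theta;W):=\max_{\theta}\operatorname{rank}(f_\theta(W))-\min_{\theta}\operatorname{rank}(f_\theta(W)).$$ Consider: (i) the rank-$r$ LoRA adapter $f_{\{A,B\}}(W)=W+AB^T$, where $A\in\mathbb{R}^{n\times r}$ and $B\in\mathbb{R}^{m\times r}$ range over all real matrices; (ii) the rank-$r$ additive spectral adapter: fix a singular value decomposition $W=USV^T$ with $U\in\mathbb{R}^{n\times n}$, $V\in\mathbb{R}^{m\times m}$ orthogonal and $S\in\mathbb{R}^{n\times m}$ rectangular diagonal with the singular values in nonincreasing order; write $U=[U_1\ U_2]$, $V=[V_1\ V_2]$ with $U_1\in\mathbb{R}^{n\times r}$, $V_1\in\mathbb{R}^{m\times r}$ the first $r$ columns; and set $f_{\{A_U,A_V\}}(W)=[U_1+A_U\ \ U_2]\,S\,[V_1+A_V\ \ V_2]^T$, where $A_U\in\mathbb{R}^{n\times r}$ and $A_V\in\mathbb{R}^{m\times r}$ range over all real matrices. Both adapters have $r(n+m)$ trainable parameters, and $$\mathcal{R}(\mathrm{LoRA};W)=r,\qquad \mathcal{R}(\mathrm{Spectral\ Adapter}^A;W)=2r.$$ *)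

theory Defs
  imports "Jordan_Normal_Form.DL_Rank"
begin

definition mrank :: "real mat \<Rightarrow> nat" where
  "mrank M = vec_space.rank (dim_row M) M"

definition orth_mat :: "nat \<Rightarrow> real mat \<Rightarrow> bool" where
  "orth_mat k Q \<longleftrightarrow> Q \<in> carrier_mat k k \<and> transpose_mat Q * Q = 1\<^sub>m k \<and> Q * transpose_mat Q = 1\<^sub>m k"

definition is_svd :: "nat \<Rightarrow> nat \<Rightarrow> real mat \<Rightarrow> real mat \<Rightarrow> real mat \<Rightarrow> real mat \<Rightarrow> bool" where
  "is_svd n m W U S V \<longleftrightarrow>
     orth_mat n U \<and> orth_mat m V \<and> S \<in> carrier_mat n m \<and>
     (\<forall>i<n. \<forall>j<m. i \<noteq> j \<longrightarrow> S $$ (i,j) = 0) \<and>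
     (\<forall>i<min n m. S $$ (i,i) \<ge> 0) \<and>
     (\<forall>i j. i \<le> j \<and> j < min n m \<longrightarrow> S $$ (j,j) \<le> S $$ (i,i)) \<and>
     W = U * S * transpose_mat V"

definition rank_capacity :: "'p set \<Rightarrow> ('p \<Rightarrow> real mat) \<Rightarrow> nat" where
  "rank_capacity \<Theta> f = Max ((\<lambda>\<theta>. mrank (f \<theta>)) ` \<Theta>) - Min ((\<lambda>\<theta>. mrank (f \<theta>)) ` \<Theta>)"

definition add_first_cols :: "real mat \<Rightarrow> real mat \<Rightarrow> real mat" where
  "add_first_cols U A = mat (dim_row U) (dim_col U)
     (\<lambda>(i,j). if j < dim_col A then U $$ (i,j) + A $$ (i,j) else U $$ (i,j))"

definition lora :: "real mat \<Rightarrow> real mat \<times> real mat \<Rightarrow> real mat" where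
  "lora W AB = W + fst AB * transpose_mat (snd AB)"

definition spectral_adapter :: "real mat \<Rightarrow> real mat \<Rightarrow> real mat \<Rightarrow> real mat \<times> real mat \<Rightarrow> real mat" where
  "spectral_adapter U S V AA =
     add_first_cols U (fst AA) * S * transpose_mat (add_first_cols V (snd AA))"

definition param_space :: "nat \<Rightarrow> nat \<Rightarrow> nat \<Rightarrow> (real mat \<times> real mat) set" where
  "param_space n m r = {(A, B). A \<in> carrier_mat n r \<and> B \<in> carrier_mat m r}"

end

theory Submission
  imports Defs
begin

lemma (in vec_space) mult_vec_in_span:
  assumes A: "A \<in> carrier_mat n na" and v: "v \<in> carrier_vec na"
  shows "A *\<^sub>v v \<in> span (set (cols A))"
proof -
  have c: "set (cols A) \<subseteq> carrier_vec n" using A cols_dim by (metis carrier_matD(1))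
  have "lincomb_list (\<lambda>i. v $ i) (cols A) = mat_of_cols n (cols A) *\<^sub>v vec (length (cols A)) (\<lambda>i. v $ i)"
    by (rule lincomb_list_as_mat_mult) (use c in auto)
  also have "mat_of_cols n (cols A) = A" using A mat_of_cols_cols[of A] by auto
  also have "vec (length (cols A)) (\<lambda>i. v $ i) = v" using A v by (intro eq_vecI) auto
  finally have eq: "lincomb_list (\<lambda>i. v $ i) (cols A) = A *\<^sub>v v" .
  have "A *\<^sub>v v \<in> span_list (cols A)" unfolding span_list_def
    by (rule CollectI, rule exI[of _ "\<lambda>i. v $ i"]) (simp add: eq)
  then show ?thesis using span_list_as_span[OF c] by simp
qed
lemma (in vec_space) rank_le_of_span:
  assumes A: "A \<in> carrier_mat n na" and B: "B \<in> carrier_mat n nb"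
    and sub: "set (cols A) \<subseteq> span (set (cols B))"
  shows "rank A \<le> rank B"
proof -
  have sB: "subspace class_ring (span (set (cols B))) V"
    using B cols_dim span_is_subspace by (metis carrier_matD(1))
  have sA: "subspace class_ring (span (set (cols A))) V"
    using A cols_dim span_is_subspace by (metis carrier_matD(1))
  have "span (set (cols A)) \<subseteq> span (set (cols B))"
    using sub by (simp add: span_is_subset sB[unfolded subspace_def])
  then have sub2: "subspace class_ring (span (set (cols A))) (vs (span (set (cols B))))"
    using nested_subspaces[OF sB sA] by blast
  have fB: "vectorspace.fin_dim class_ring (vs (span (set (cols B))))"
    using fin_dim_span_cols B by blast
  show ?thesis unfolding rank_def
    using vectorspace.subspace_dim[OF subspace_is_vs[OF sB] sub2 fB] fin_dim_span_cols[OF A] by auto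
qed

lemma (in vec_space) rank_mult_le:
  assumes A: "A \<in> carrier_mat n k" and B: "B \<in> carrier_mat k l"
  shows "rank (A * B) \<le> rank A"
proof (rule rank_le_of_span[OF _ A])
  show "A * B \<in> carrier_mat n l" using A B by auto
  show "set (cols (A * B)) \<subseteq> span (set (cols A))"
  proof
    fix x assume "x \<in> set (cols (A * B))"
    then obtain j where j: "j < l" "x = col (A * B) j" using A B
      by (metis cols_length cols_nth in_set_conv_nth carrier_matD(2) index_mult_mat(3))
    then have "x = A *\<^sub>v col B j" using A B by (simp add: mult_mat_vec_def)
    then show "x \<in> span (set (cols A))" using mult_vec_in_span[OF A] B j by auto
  qed
qed

lemma (in vec_space) rank_le_nr:
  assumes A: "A \<in> carrier_mat n na"
  shows "rank A \<le> n"
proof -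
  have c: "set (cols A) \<subseteq> carrier_vec n" using A cols_dim by (metis carrier_matD(1))
  have sA: "subspace class_ring (span (set (cols A))) V"
    using A cols_dim span_is_subspace by (metis carrier_matD(1))
  show ?thesis unfolding rank_def using subspace_dim[OF sA fin_dim] fin_dim_span_cols[OF A] dim_is_n by auto
qed


lemma mrank_mult_le:
  assumes A: "A \<in> carrier_mat n k" and B: "B \<in> carrier_mat k l"
  shows "mrank (A * B) \<le> mrank A"
  using vec_space.rank_mult_le[OF A B] A B unfolding mrank_def by simp
lemma mrank_le_col: "A \<in> carrier_mat n k \<Longrightarrow> mrank A \<le> k"
  unfolding mrank_def using vec_space.rank_le_nc by simp
lemma mrank_le_row: "A \<in> carrier_mat n k \<Longrightarrow> mrank A \<le> n"
  unfolding mrank_def using vec_space.rank_le_nr by simp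
lemma mrank_add_le: "A \<in> carrier_mat n k \<Longrightarrow> B \<in> carrier_mat n k \<Longrightarrow> mrank (A + B) \<le> mrank A + mrank B"
  unfolding mrank_def using vec_space.rank_subadditive by simp

lemma mat_mult_mat:
  "mat n k f * mat k m g = mat n m (\<lambda>(i,j). \<Sum>l<k. f (i,l) * g (l,j))"
  by (rule eq_matI) (auto simp: scalar_prod_def lessThan_atLeast0 intro!: sum.cong)

lemma transpose_mat_mat: "transpose_mat (mat n m f) = mat m n (\<lambda>(i,j). f (j,i))"
  by (rule eq_matI) auto

lemma mat_of_carrier: "A \<in> carrier_mat n m \<Longrightarrow> A = mat n m (\<lambda>(i,j). A $$ (i,j))"
  by (rule eq_matI) auto

lemma diag_sum:
  fixes s :: "nat \<Rightarrow> real"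
  assumes "a < n"
  shows "(\<Sum>l<n - k. (if a = l + k then 1 else 0) * (if c = l + k then s (l + k) else 0))
      = (if a = c \<and> k \<le> a then s a else 0)"
proof -
  have "(\<Sum>l<n - k. (if a = l + k then 1 else 0) * (if c = l + k then s (l + k) else 0))
      = (\<Sum>l<n - k. if l = a - k then (if k \<le> a \<and> c = a then s a else 0) else 0)"
    by (rule sum.cong) auto
  also have "\<dots> = (if a = c \<and> k \<le> a then s a else 0)" using assms by auto
  finally show ?thesis .
qed

lemma diag_factor:
  fixes s :: "nat \<Rightarrow> real"
  assumes "k \<le> n"
  shows "mat n m (\<lambda>(a,c). if a = c \<and> k \<le> a then s a else 0)
    = mat n (n-k) (\<lambda>(a,j). if a = j + k then 1 else 0) * mat (n-k) m (\<lambda>(j,c). if c = j + k then s (j + k) else 0)"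
  unfolding mat_mult_mat by (rule eq_matI) (auto simp: diag_sum)

lemma rank_UDV:
  assumes U: "U \<in> carrier_mat n n" and V: "V \<in> carrier_mat m m" and k: "k \<le> n"
  shows "mrank (U * mat n m (\<lambda>(a,c). if a = c \<and> k \<le> a then s a else 0) * transpose_mat V) \<le> n - k"
proof -
  define G where "G = mat n (n-k) (\<lambda>(a,j). if a = j + k then (1::real) else 0)"
  define H where "H = mat (n-k) m (\<lambda>(j,c). if c = j + k then s (j + k) else 0)"
  have G: "G \<in> carrier_mat n (n-k)" and H: "H \<in> carrier_mat (n-k) m" unfolding G_def H_def by auto
  have "U * mat n m (\<lambda>(a,c). if a = c \<and> k \<le> a then s a else 0) * transpose_mat V = (U * G) * (H * transpose_mat V)"
  proof -
    have Vt: "transpose_mat V \<in> carrier_mat m m" using V by simp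
    have GH: "G * H \<in> carrier_mat n m" using G H by simp
    have "U * (G * H) * transpose_mat V = U * ((G * H) * transpose_mat V)"
      using assoc_mult_mat[OF U GH Vt] .
    also have "(G * H) * transpose_mat V = G * (H * transpose_mat V)"
      using assoc_mult_mat[OF G H Vt] .
    also have "U * (G * (H * transpose_mat V)) = (U * G) * (H * transpose_mat V)"
      using assoc_mult_mat[OF U G, of "H * transpose_mat V" m] H Vt by simp
    finally show ?thesis unfolding diag_factor[OF k] G_def H_def .
  qed
  also have "mrank \<dots> \<le> mrank (U * G)"
    by (rule mrank_mult_le[of _ n "n-k" _ m]) (use U V G H in auto)
  also have "\<dots> \<le> n - k" by (rule mrank_le_col) (use U G in auto)
  finally show ?thesis .
qed

lemma add_first_cols_carrier: "U \<in> carrier_mat n k \<Longrightarrow> add_first_cols U A \<in> carrier_mat n k"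
  unfolding add_first_cols_def by auto

lemma add_first_cols_sum:
  assumes U: "U \<in> carrier_mat n n" and A: "A \<in> carrier_mat n r" and r: "r \<le> n"
  shows "add_first_cols U A = U + A * mat r n (\<lambda>(i,j). if i = j then 1 else 0)"
proof -
  have "A * mat r n (\<lambda>(i,j). if i = j then 1 else 0) = mat n n (\<lambda>(i,j). if j < r then A $$ (i,j) else 0)"
  proof -
    have "A * mat r n (\<lambda>(i,j). if i = j then 1 else 0) = mat n r (\<lambda>(i,j). A $$ (i,j)) * mat r n (\<lambda>(i,j). if i = j then 1 else 0)"
      using mat_of_carrier[OF A] by simp
    also have "\<dots> = mat n n (\<lambda>(i,j). if j < r then A $$ (i,j) else 0)"
      unfolding mat_mult_mat by (rule eq_matI) (auto simp: if_distrib cong: if_cong)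
    finally show ?thesis .
  qed
  then show ?thesis unfolding add_first_cols_def using U A r by (intro eq_matI) auto
qed

lemma add_first_cols_zero:
  assumes U: "U \<in> carrier_mat n n" and r: "r \<le> n"
  shows "add_first_cols U (0\<^sub>m n r) = U"
  unfolding add_first_cols_def using U r by (intro eq_matI) auto

lemma add_first_cols_prod:
  assumes U: "U \<in> carrier_mat n k" and A: "A \<in> carrier_mat n r" and r: "r \<le> k"
    and fr: "\<And>j. j < r \<Longrightarrow> f j < k"
    and hA: "\<And>i j. i < n \<Longrightarrow> j < r \<Longrightarrow> A $$ (i,j) = c j * U $$ (i, f j) - U $$ (i,j)"
  shows "add_first_cols U A = U * mat k k (\<lambda>(l,j). if j < r then (if l = f j then c j else 0) else (if l = j then 1 else 0))"
proof -
  have "U * mat k k (\<lambda>(l,j). if j < r then (if l = f j then c j else 0) else (if l = j then 1 else 0))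
      = mat n k (\<lambda>(i,j). U $$ (i,j)) * mat k k (\<lambda>(l,j). if j < r then (if l = f j then c j else 0) else (if l = j then 1 else 0))"
    using mat_of_carrier[OF U] by simp
  also have "\<dots> = mat n k (\<lambda>(i,j). if j < r then c j * U $$ (i, f j) else U $$ (i,j))"
  proof -
    have key: "(\<Sum>l<k. U $$ (i, l) * (if j < r then if l = f j then c j else 0 else if l = j then 1 else 0))
        = (if j < r then c j * U $$ (i, f j) else U $$ (i,j))" if i: "i < n" and j: "j < k" for i j
    proof (cases "j < r")
      case True
      have "(\<Sum>l<k. U $$ (i, l) * (if j < r then if l = f j then c j else 0 else if l = j then 1 else 0))
          = (\<Sum>l<k. if l = f j then c j * U $$ (i, l) else 0)" using True by (intro sum.cong) auto
      also have "\<dots> = c j * U $$ (i, f j)" using fr[OF True] by simp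
      finally show ?thesis using True by simp
    next
      case False
      have "(\<Sum>l<k. U $$ (i, l) * (if j < r then if l = f j then c j else 0 else if l = j then 1 else 0))
          = (\<Sum>l<k. if l = j then U $$ (i, l) else 0)" using False by (intro sum.cong) auto
      also have "\<dots> = U $$ (i, j)" using j by simp
      finally show ?thesis using False by simp
    qed
    show ?thesis unfolding mat_mult_mat by (rule eq_matI) (simp_all add: key)
  qed
  finally show ?thesis unfolding add_first_cols_def using U A r hA by (intro eq_matI) auto
qed

lemma spec_sum1:
  fixes s :: "nat \<Rightarrow> real"
  assumes "b < m" 
  shows "(\<Sum>l<n. (if l < r then (if a = l + r then 1 else 0) else (if a = l then 1 else 0)) * (if l = b then s l else 0))
     = (if b < n then (if b < r then (if a = b + r then s b else 0) else (if a = b then s b else 0)) else 0)"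
proof -
  have "(\<Sum>l<n. (if l < r then (if a = l + r then 1 else 0) else (if a = l then 1 else 0)) * (if l = b then s l else 0))
     = (\<Sum>l<n. if l = b then (if b < r then (if a = b + r then s b else 0) else (if a = b then s b else 0)) else 0)"
    by (intro sum.cong) auto
  then show ?thesis by simp
qed

lemma spec_sum2:
  fixes s lam :: "nat \<Rightarrow> real"
  assumes rn: "2*r \<le> n" and nm: "n \<le> m" and a: "a < n" and c: "c < m"
    and hl: "\<And>b. b < r \<Longrightarrow> s b * lam b = - s (b + r)"
  shows "(\<Sum>b<m. (if b < n then (if b < r then (if a = b + r then s b else 0) else (if a = b then s b else 0)) else 0)
            * (if b < r then (if c = b + r then lam b else 0) else (if c = b then 1 else 0)))
     = (if a = c \<and> 2*r \<le> a then s a else 0)"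
proof -
  let ?g = "\<lambda>b. (if b < n then (if b < r then (if a = b + r then s b else 0) else (if a = b then s b else 0)) else 0)
            * (if b < r then (if c = b + r then lam b else 0) else (if c = b then 1 else 0))"
  have split: "{..<m} = {..<r} \<union> {r..<m}" using rn nm by auto
  have "sum ?g {..<m} = sum ?g {..<r} + sum ?g {r..<m}"
    unfolding split by (rule sum.union_disjoint) auto
  also have "sum ?g {..<r} = (\<Sum>b<r. if b = a - r then (if r \<le> a \<and> c = a then s b * lam b else 0) else 0)"
    using rn by (intro sum.cong) auto
  also have "\<dots> = (if r \<le> a \<and> a < 2*r \<and> c = a then s (a - r) * lam (a - r) else 0)"
    by auto
  also have "sum ?g {r..<m} = (\<Sum>b\<in>{r..<m}. if b = a then (if r \<le> a \<and> c = a then s a else 0) else 0)"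
    using a by (intro sum.cong) auto
  also have "\<dots> = (if r \<le> a \<and> c = a then s a else 0)"
    using a nm by auto
  finally show ?thesis
  proof -
    assume eq: "sum ?g {..<m} = (if r \<le> a \<and> a < 2 * r \<and> c = a then s (a - r) * lam (a - r) else 0) +
                               (if r \<le> a \<and> c = a then s a else 0)"
    show ?thesis
    proof (cases "r \<le> a \<and> a < 2*r")
      case True
      then have "s (a - r) * lam (a - r) = - s a" using hl[of "a - r"] by auto
      then show ?thesis using eq True by auto
    next
      case False
      then show ?thesis using eq by auto
    qed
  qed
qed

lemma spec_diag:
  fixes s lam :: "nat \<Rightarrow> real"
  assumes rn: "2*r \<le> n" and nm: "n \<le> m"
    and hl: "\<And>b. b < r \<Longrightarrow> s b * lam b = - s (b + r)"
  shows "mat n n (\<lambda>(l,j). if j < r then (if l = j + r then 1 else 0) else (if l = j then 1 else 0))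
        * mat n m (\<lambda>(a,c). if a = c then s a else 0)
        * transpose_mat (mat m m (\<lambda>(l,j). if j < r then (if l = j + r then lam j else 0) else (if l = j then 1 else 0)))
       = mat n m (\<lambda>(a,c). if a = c \<and> 2*r \<le> a then s a else 0)"
proof -
  have 1: "mat n n (\<lambda>(l,j). if j < r then (if l = j + r then 1 else 0) else (if l = j then 1 else 0))
        * mat n m (\<lambda>(a,c). if a = c then s a else 0)
     = mat n m (\<lambda>(a,b). if b < n then (if b < r then (if a = b + r then s b else 0) else (if a = b then s b else 0)) else 0)"
    unfolding mat_mult_mat by (rule eq_matI) (simp_all add: spec_sum1)
  show ?thesis unfolding 1 unfolding transpose_mat_mat mat_mult_mat
    by (rule eq_matI) (simp_all add: spec_sum2[where s=s and lam=lam and r=r, OF rn nm _ _ hl])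
qed

lemma lora_diag:
  fixes s :: "nat \<Rightarrow> real"
  shows "mat n m (\<lambda>(a,c). if a = c then s a else 0)
     + mat n r (\<lambda>(a,j). if a = j then - s j else 0) * transpose_mat (mat m r (\<lambda>(c,j). if c = j then 1 else 0))
     = mat n m (\<lambda>(a,c). if a = c \<and> r \<le> a then s a else 0)"
proof -
  have key: "(\<Sum>j<r. (if a = j then - s j else 0) * (if c = j then 1 else 0)) = (if a = c \<and> a < r then - s a else 0)" for a c
  proof -
    have "(\<Sum>j<r. (if a = j then - s j else 0) * (if c = j then 1 else 0)) = (\<Sum>j<r. if j = a then (if c = a then - s a else 0) else 0)"
      by (intro sum.cong) auto
    then show ?thesis by auto
  qed
  show ?thesis unfolding transpose_mat_mat mat_mult_mat by (rule eq_matI) (auto simp: key)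
qed

lemma spec_assoc:
  fixes U E S F V :: "real mat"
  assumes U: "U \<in> carrier_mat n n" and E: "E \<in> carrier_mat n n" and S: "S \<in> carrier_mat n m"
    and F: "F \<in> carrier_mat m m" and V: "V \<in> carrier_mat m m"
  shows "(U * E) * S * transpose_mat (V * F) = U * (E * S * transpose_mat F) * transpose_mat V"
proof -
  have Vt: "transpose_mat V \<in> carrier_mat m m" and Ft: "transpose_mat F \<in> carrier_mat m m" using V F by auto
  have "transpose_mat (V * F) = transpose_mat F * transpose_mat V" using transpose_mult[OF V F] .
  then show ?thesis using U E S Ft Vt by (simp add: assoc_mult_mat[of _ n n _ m _ m])
qed

lemma lora_assoc:
  fixes U S V K L :: "real mat"
  assumes U: "U \<in> carrier_mat n n" and S: "S \<in> carrier_mat n m" and V: "V \<in> carrier_mat m m"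
    and K: "K \<in> carrier_mat n r" and L: "L \<in> carrier_mat m r"
  shows "U * S * transpose_mat V + (U * K) * transpose_mat (V * L) = U * (S + K * transpose_mat L) * transpose_mat V"
proof -
  have Vt: "transpose_mat V \<in> carrier_mat m m" and Lt: "transpose_mat L \<in> carrier_mat r m" using V L by auto
  have "transpose_mat (V * L) = transpose_mat L * transpose_mat V" using transpose_mult[OF V L] .
  then have "(U * K) * transpose_mat (V * L) = U * (K * transpose_mat L) * transpose_mat V"
  proof -
    have KL: "K * transpose_mat L \<in> carrier_mat n m" using K Lt by auto
    have LV: "transpose_mat L * transpose_mat V \<in> carrier_mat r m" using Lt Vt by auto
    have "U * (K * transpose_mat L) * transpose_mat V = U * ((K * transpose_mat L) * transpose_mat V)"
      using assoc_mult_mat[OF U KL Vt] .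
    also have "(K * transpose_mat L) * transpose_mat V = K * (transpose_mat L * transpose_mat V)"
      using assoc_mult_mat[OF K Lt Vt] .
    also have "U * (K * (transpose_mat L * transpose_mat V)) = (U * K) * (transpose_mat L * transpose_mat V)"
      using assoc_mult_mat[OF U K LV] by simp
    finally show ?thesis using \<open>transpose_mat (V * L) = transpose_mat L * transpose_mat V\<close> by simp
  qed
  moreover have "U * (S + K * transpose_mat L) = U * S + U * (K * transpose_mat L)"
    using U S K Lt by (simp add: mult_add_distrib_mat[of _ n n _ m])
  moreover have "(U * S + U * (K * transpose_mat L)) * transpose_mat V = U * S * transpose_mat V + U * (K * transpose_mat L) * transpose_mat V"
    using U S K Lt Vt by (simp add: add_mult_distrib_mat[of _ n m _ _ m])
  ultimately show ?thesis by simp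
qed

lemma spec_expand:
  fixes U A S V B P Q :: "real mat"
  assumes U: "U \<in> carrier_mat n n" and A: "A \<in> carrier_mat n r" and S: "S \<in> carrier_mat n m"
    and V: "V \<in> carrier_mat m m" and B: "B \<in> carrier_mat m r"
    and P: "P \<in> carrier_mat r n" and Q: "Q \<in> carrier_mat r m"
  shows "(U + A * P) * S * transpose_mat (V + B * Q)
     = U * S * transpose_mat V + (U * S * transpose_mat Q) * transpose_mat B + A * (P * S * transpose_mat (V + B * Q))"
proof -
  define Y where "Y = transpose_mat (V + B * Q)"
  have Y: "Y \<in> carrier_mat m m" unfolding Y_def using V B Q by auto
  have Yeq: "Y = transpose_mat V + transpose_mat Q * transpose_mat B"
    unfolding Y_def using V B Q by (simp add: transpose_add[of _ m m] transpose_mult[OF B Q])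
  have AP: "A * P \<in> carrier_mat n n" using A P by auto
  have "(U + A * P) * S = U * S + A * P * S" using add_mult_distrib_mat[OF U AP S] .
  then have "(U + A * P) * S * Y = U * S * Y + A * P * S * Y"
    using U AP S Y by (simp add: add_mult_distrib_mat[of _ n m _ _ m])
  also have "A * P * S * Y = A * (P * S * Y)"
  proof -
    have PS: "P * S \<in> carrier_mat r m" using P S by auto
    have "A * P * S = A * (P * S)" using assoc_mult_mat[OF A P S] .
    then have "A * P * S * Y = A * (P * S) * Y" by simp
    also have "\<dots> = A * (P * S * Y)" using assoc_mult_mat[OF A PS Y] .
    finally show ?thesis .
  qed
  also have "U * S * Y = U * S * transpose_mat V + (U * S * transpose_mat Q) * transpose_mat B"
  proof -
    have US: "U * S \<in> carrier_mat n m" using U S by auto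
    have Vt: "transpose_mat V \<in> carrier_mat m m" and Qt: "transpose_mat Q \<in> carrier_mat m r"
      and Bt: "transpose_mat B \<in> carrier_mat r m" using V Q B by auto
    have "U * S * Y = U * S * transpose_mat V + U * S * (transpose_mat Q * transpose_mat B)"
      unfolding Yeq using mult_add_distrib_mat[OF US Vt] Qt Bt by simp
    also have "U * S * (transpose_mat Q * transpose_mat B) = (U * S * transpose_mat Q) * transpose_mat B"
      using assoc_mult_mat[OF US Qt Bt] by simp
    finally show ?thesis .
  qed
  finally show ?thesis unfolding Y_def .
qed

lemma neg3:
  fixes X W D1 D2 :: "real mat"
  assumes "X \<in> carrier_mat n m" "W \<in> carrier_mat n m" "D1 \<in> carrier_mat n m" "D2 \<in> carrier_mat n m"
    and "X = W + D1 + D2"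
  shows "W = X + - D1 + - D2"
  using assms by (intro eq_matI) auto

lemma rank_capacity_eq:
  assumes b: "\<And>\<theta>. \<theta> \<in> \<Theta> \<Longrightarrow> lo \<le> mrank (f \<theta>) \<and> mrank (f \<theta>) \<le> hi"
    and t1: "\<theta>1 \<in> \<Theta>" "mrank (f \<theta>1) = hi" and t2: "\<theta>2 \<in> \<Theta>" "mrank (f \<theta>2) = lo"
  shows "rank_capacity \<Theta> f = hi - lo"
proof -
  let ?T = "(\<lambda>\<theta>. mrank (f \<theta>)) ` \<Theta>"
  have fin: "finite ?T" by (rule finite_subset[of _ "{..hi}"]) (use b in auto)
  have "Max ?T = hi" by (rule Max_eqI[OF fin]) (use b t1 in force)+
  moreover have "Min ?T = lo" by (rule Min_eqI[OF fin]) (use b t2 in force)+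
  ultimately show ?thesis unfolding rank_capacity_def by simp
qed

lemma lora_lower:
  assumes W: "W \<in> carrier_mat n m" and A: "A \<in> carrier_mat n r" and B: "B \<in> carrier_mat m r"
  shows "mrank W \<le> mrank (lora W (A, B)) + r"
proof -
  have Bt: "transpose_mat B \<in> carrier_mat r m" using B by simp
  have X: "lora W (A, B) \<in> carrier_mat n m" unfolding lora_def using W A Bt by auto
  have D: "(- A) * transpose_mat B \<in> carrier_mat n m" using A Bt by auto
  have "W = lora W (A, B) + (- A) * transpose_mat B"
    unfolding lora_def using W A Bt by (intro eq_matI) auto
  then have "mrank W \<le> mrank (lora W (A, B)) + mrank ((- A) * transpose_mat B)"
    using mrank_add_le[OF X D] by simp
  also have "mrank ((- A) * transpose_mat B) \<le> mrank (- A)"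
    by (rule mrank_mult_le[of _ n r _ m]) (use A Bt in auto)
  also have "mrank (- A) \<le> r" by (rule mrank_le_col[of _ n]) (use A in auto)
  finally show ?thesis by simp
qed

lemma spec_lower:
  assumes U: "U \<in> carrier_mat n n" and S: "S \<in> carrier_mat n m" and V: "V \<in> carrier_mat m m"
    and A: "A \<in> carrier_mat n r" and B: "B \<in> carrier_mat m r" and rn: "r \<le> n" and nm: "n \<le> m"
  shows "mrank (U * S * transpose_mat V) \<le> mrank (spectral_adapter U S V (A, B)) + 2 * r"
proof -
  define P where "P = (mat r n (\<lambda>(i,j). if i = j then 1 else 0) :: real mat)"
  define Q where "Q = (mat r m (\<lambda>(i,j). if i = j then 1 else 0) :: real mat)"
  have P: "P \<in> carrier_mat r n" and Q: "Q \<in> carrier_mat r m" unfolding P_def Q_def by auto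
  have rm: "r \<le> m" using rn nm by simp
  have eU: "add_first_cols U A = U + A * P" unfolding P_def by (rule add_first_cols_sum[OF U A rn])
  have eV: "add_first_cols V B = V + B * Q" unfolding Q_def by (rule add_first_cols_sum[OF V B rm])
  define X where "X = spectral_adapter U S V (A, B)"
  define D1 where "D1 = (U * S * transpose_mat Q) * transpose_mat B"
  define D2 where "D2 = A * (P * S * transpose_mat (V + B * Q))"
  have Qt: "transpose_mat Q \<in> carrier_mat m r" and Bt: "transpose_mat B \<in> carrier_mat r m" using Q B by auto
  have USQ: "U * S * transpose_mat Q \<in> carrier_mat n r" using U S Qt by auto
  have Y: "transpose_mat (V + B * Q) \<in> carrier_mat m m" using V B Q by auto
  have PSY: "P * S * transpose_mat (V + B * Q) \<in> carrier_mat r m" using P S Y by auto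
  have D1: "D1 \<in> carrier_mat n m" unfolding D1_def using USQ Bt by auto
  have D2: "D2 \<in> carrier_mat n m" unfolding D2_def using A PSY by auto
  have W: "U * S * transpose_mat V \<in> carrier_mat n m" using U S V by auto
  have X: "X \<in> carrier_mat n m"
  proof -
    have a1: "add_first_cols U A * S \<in> carrier_mat n m" using mult_carrier_mat[OF add_first_cols_carrier[OF U] S] .
    have a2: "transpose_mat (add_first_cols V B) \<in> carrier_mat m m" using add_first_cols_carrier[OF V, of B] by simp
    show ?thesis unfolding X_def spectral_adapter_def fst_conv snd_conv using mult_carrier_mat[OF a1 a2] .
  qed
  have "X = U * S * transpose_mat V + D1 + D2"
    unfolding X_def spectral_adapter_def fst_conv snd_conv eU eV D1_def D2_def
    by (rule spec_expand[OF U A S V B P Q])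
  then have eq: "U * S * transpose_mat V = X + - D1 + - D2" by (rule neg3[OF X W D1 D2])
  have XD1: "X + - D1 \<in> carrier_mat n m" using X D1 by auto
  have mD1: "- D1 \<in> carrier_mat n m" and mD2: "- D2 \<in> carrier_mat n m" using D1 D2 by auto
  have "mrank (U * S * transpose_mat V) \<le> mrank (X + - D1) + mrank (- D2)"
    unfolding eq by (rule mrank_add_le[OF XD1 mD2])
  also have "mrank (X + - D1) \<le> mrank X + mrank (- D1)" by (rule mrank_add_le[OF X mD1])
  also have "mrank (- D1) \<le> r"
  proof -
    have "- D1 = (- (U * S * transpose_mat Q)) * transpose_mat B"
      unfolding D1_def by (rule sym, rule uminus_mult_left_mat) (use USQ Bt in auto)
    also have "mrank \<dots> \<le> mrank (- (U * S * transpose_mat Q))"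
      by (rule mrank_mult_le[of _ n r _ m]) (use USQ Bt in auto)
    also have "\<dots> \<le> r" by (rule mrank_le_col[of _ n]) (use USQ in auto)
    finally show ?thesis .
  qed
  also have "mrank (- D2) \<le> r"
  proof -
    have "- D2 = (- A) * (P * S * transpose_mat (V + B * Q))"
      unfolding D2_def by (rule sym, rule uminus_mult_left_mat) (use A PSY in auto)
    also have "mrank \<dots> \<le> mrank (- A)"
      by (rule mrank_mult_le[of _ n r _ m]) (use A PSY in auto)
    also have "\<dots> \<le> r" by (rule mrank_le_col[of _ n]) (use A in auto)
    finally show ?thesis .
  qed
  finally show ?thesis unfolding X_def by simp
qed

theorem lemma3p1:
  fixes n m r :: nat and W U S V :: "real mat"
  assumes "n \<le> m"
    and "W \<in> carrier_mat n m"
    and "mrank W = n"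
    and "r \<ge> 1" and "2 * r \<le> n"
    and "is_svd n m W U S V"
  shows "rank_capacity (param_space n m r) (lora W) = r
       \<and> rank_capacity (param_space n m r) (spectral_adapter U S V) = 2 * r"
proof -
  note nm = assms(1) and Wc = assms(2) and rW = assms(3) and rn2 = assms(5)
  have rn: "r \<le> n" using rn2 by simp
  have U: "U \<in> carrier_mat n n" and V: "V \<in> carrier_mat m m" and S: "S \<in> carrier_mat n m"
    and off: "\<And>i j. i < n \<Longrightarrow> j < m \<Longrightarrow> i \<noteq> j \<Longrightarrow> S $$ (i,j) = 0"
    and nonneg: "\<And>i. i < min n m \<Longrightarrow> S $$ (i,i) \<ge> 0"
    and ord: "\<And>i j. i \<le> j \<Longrightarrow> j < min n m \<Longrightarrow> S $$ (j,j) \<le> S $$ (i,i)"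
    and Weq: "W = U * S * transpose_mat V"
    using assms(6) unfolding is_svd_def orth_mat_def by auto
  define s where "s a = S $$ (a,a)" for a
  have Sd: "S = mat n m (\<lambda>(a,c). if a = c then s a else 0)"
    using S off unfolding s_def by (intro eq_matI) auto
  have mem: "(A, B) \<in> param_space n m r \<longleftrightarrow> A \<in> carrier_mat n r \<and> B \<in> carrier_mat m r" for A B
    unfolding param_space_def by simp
  have z: "(0\<^sub>m n r, 0\<^sub>m m r) \<in> param_space n m r" unfolding mem by simp
  have part1: "rank_capacity (param_space n m r) (lora W) = n - (n - r)"
  proof (rule rank_capacity_eq)
    fix \<theta> assume th: "\<theta> \<in> param_space n m r"
    then obtain A B where AB: "\<theta> = (A, B)" "A \<in> carrier_mat n r" "B \<in> carrier_mat m r"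
      unfolding param_space_def by auto
    have "lora W \<theta> \<in> carrier_mat n m" unfolding AB lora_def using Wc AB by auto
    then have "mrank (lora W \<theta>) \<le> n" by (rule mrank_le_row)
    moreover have "n \<le> mrank (lora W \<theta>) + r" using lora_lower[OF Wc AB(2,3)] rW AB by simp
    ultimately show "n - r \<le> mrank (lora W \<theta>) \<and> mrank (lora W \<theta>) \<le> n" by simp
  next
    show "(0\<^sub>m n r, 0\<^sub>m m r) \<in> param_space n m r" by (rule z)
    have "lora W (0\<^sub>m n r, 0\<^sub>m m r) = W" unfolding lora_def using Wc by (intro eq_matI) auto
    then show "mrank (lora W (0\<^sub>m n r, 0\<^sub>m m r)) = n" using rW by simp
  next
    define Ka where "Ka = mat n r (\<lambda>(a,j). if a = j then - s j else 0)"
    define Kb where "Kb = (mat m r (\<lambda>(c,j). if c = j then 1 else 0) :: real mat)"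
    have Ka: "Ka \<in> carrier_mat n r" and Kb: "Kb \<in> carrier_mat m r" unfolding Ka_def Kb_def by auto
    show th: "(U * Ka, V * Kb) \<in> param_space n m r" unfolding mem using U V Ka Kb by auto
    have "lora W (U * Ka, V * Kb) = U * S * transpose_mat V + (U * Ka) * transpose_mat (V * Kb)"
      unfolding lora_def Weq by simp
    also have "\<dots> = U * (S + Ka * transpose_mat Kb) * transpose_mat V" by (rule lora_assoc[OF U S V Ka Kb])
    also have "S + Ka * transpose_mat Kb = mat n m (\<lambda>(a,c). if a = c \<and> r \<le> a then s a else 0)"
      unfolding Ka_def Kb_def by (subst Sd, rule lora_diag)
    finally have "mrank (lora W (U * Ka, V * Kb)) \<le> n - r" using rank_UDV[OF U V rn] by simp
    moreover have "n \<le> mrank (lora W (U * Ka, V * Kb)) + r"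
      using lora_lower[OF Wc, of "U * Ka" r "V * Kb"] U V Ka Kb rW by auto
    ultimately show "mrank (lora W (U * Ka, V * Kb)) = n - r" by simp
  qed
  have part2: "rank_capacity (param_space n m r) (spectral_adapter U S V) = n - (n - 2 * r)"
  proof (rule rank_capacity_eq)
    fix \<theta> assume th: "\<theta> \<in> param_space n m r"
    then obtain A B where AB: "\<theta> = (A, B)" "A \<in> carrier_mat n r" "B \<in> carrier_mat m r"
      unfolding param_space_def by auto
    have "spectral_adapter U S V \<theta> \<in> carrier_mat n m"
    proof -
      have a1: "add_first_cols U A * S \<in> carrier_mat n m" using mult_carrier_mat[OF add_first_cols_carrier[OF U] S] .
      have a2: "transpose_mat (add_first_cols V B) \<in> carrier_mat m m" using add_first_cols_carrier[OF V, of B] by simp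
      show ?thesis unfolding AB spectral_adapter_def fst_conv snd_conv using mult_carrier_mat[OF a1 a2] .
    qed
    then have "mrank (spectral_adapter U S V \<theta>) \<le> n" by (rule mrank_le_row)
    moreover have "n \<le> mrank (spectral_adapter U S V \<theta>) + 2 * r"
      using spec_lower[OF U S V AB(2,3) rn nm] rW Weq AB by simp
    ultimately show "n - 2 * r \<le> mrank (spectral_adapter U S V \<theta>) \<and> mrank (spectral_adapter U S V \<theta>) \<le> n" by simp
  next
    show "(0\<^sub>m n r, 0\<^sub>m m r) \<in> param_space n m r" by (rule z)
    have "spectral_adapter U S V (0\<^sub>m n r, 0\<^sub>m m r) = W"
      unfolding spectral_adapter_def Weq fst_conv snd_conv
      using add_first_cols_zero[OF U rn] add_first_cols_zero[OF V, of r] rn nm by simp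
    then show "mrank (spectral_adapter U S V (0\<^sub>m n r, 0\<^sub>m m r)) = n" using rW by simp
  next
    define lam where "lam j = - s (j + r) / s j" for j
    define AU where "AU = mat n r (\<lambda>(i,j). 1 * U $$ (i, j + r) - U $$ (i,j))"
    define AV where "AV = mat m r (\<lambda>(i,j). lam j * V $$ (i, j + r) - V $$ (i,j))"
    have AU: "AU \<in> carrier_mat n r" and AV: "AV \<in> carrier_mat m r" unfolding AU_def AV_def by auto
    show "(AU, AV) \<in> param_space n m r" unfolding mem using AU AV by auto
    have eU: "add_first_cols U AU = U * mat n n (\<lambda>(l,j). if j < r then (if l = j + r then 1 else 0) else (if l = j then 1 else 0))"
      by (rule add_first_cols_prod[OF U AU rn, where c = "\<lambda>j. 1" and f = "\<lambda>j. j + r"])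
         (use rn2 in \<open>auto simp: AU_def\<close>)
    have eV: "add_first_cols V AV = V * mat m m (\<lambda>(l,j). if j < r then (if l = j + r then lam j else 0) else (if l = j then 1 else 0))"
      by (rule add_first_cols_prod[OF V AV, where c = lam and f = "\<lambda>j. j + r"])
         (use rn2 nm in \<open>auto simp: AV_def\<close>)
    have hl: "s b * lam b = - s (b + r)" if b: "b < r" for b
    proof (cases "s b = 0")
      case True
      have "b + r < min n m" using b rn2 nm by simp
      then have "0 \<le> s (b + r)" "s (b + r) \<le> s b" using nonneg ord[of b "b + r"] unfolding s_def by auto
      then show ?thesis using True by simp
    next
      case False
      then show ?thesis unfolding lam_def by (simp add: field_simps)
    qed
    have "spectral_adapter U S V (AU, AV)
        = U * (mat n n (\<lambda>(l,j). if j < r then (if l = j + r then 1 else 0) else (if l = j then 1 else 0))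
               * S * transpose_mat (mat m m (\<lambda>(l,j). if j < r then (if l = j + r then lam j else 0) else (if l = j then 1 else 0))))
             * transpose_mat V"
      unfolding spectral_adapter_def fst_conv snd_conv eU eV
      by (rule spec_assoc[OF U _ S _ V]) auto
    also have "mat n n (\<lambda>(l,j). if j < r then (if l = j + r then 1 else 0) else (if l = j then 1 else 0))
               * S * transpose_mat (mat m m (\<lambda>(l,j). if j < r then (if l = j + r then lam j else 0) else (if l = j then 1 else 0)))
             = mat n m (\<lambda>(a,c). if a = c \<and> 2*r \<le> a then s a else 0)"
      by (subst Sd, rule spec_diag[where s=s and lam=lam and r=r, OF rn2 nm hl])
    finally have "mrank (spectral_adapter U S V (AU, AV)) \<le> n - 2 * r" using rank_UDV[OF U V rn2] by simp
    moreover have "n \<le> mrank (spectral_adapter U S V (AU, AV)) + 2 * r"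
      using spec_lower[OF U S V AU AV rn nm] rW Weq by simp
    ultimately show "mrank (spectral_adapter U S V (AU, AV)) = n - 2 * r" by simp
  qed
  show ?thesis using part1 part2 rn rn2 by simp
qed
end
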